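(* Let $b\in\{0,1\}^d$ and let $q$ be the effective gradient associated with $b$. Then $H_{b'}(q)\ge 0$ (equivalently $N_{b'}(q)\le 1$) for every bitmap $b'\ge b$.
   Context: Jackson network with a tree topology on nodes $\{1,\dots,d\}$, root node $1$; $i\to j$ means node $j$ is a child of node $i$. Customers arrive from outside only at node $1$, with rate $\lambda>0$. For $i\to j$, $\mu_{i,j}>0$ is the rate at which node $i$ serves customers and sends them to node $j$; $\mu_{i,0}\ge 0$ is the rate at which node $i$ serves customers who then leave the system. Let $\mu_i=\sum_{k:i\to k}\mu_{i,k}+\mu_{i,0}>0$. Arrival rates: $\Lambda_1=\lambda$ and $\Lambda_j=\Lambda_i\mu_{i,j}/\mu_i$ if $i\to j$. Utilities $\rho_i=\Lambda_i/\mu_i$, assumed to satisfy $\max_i\rho_i<1$; also $\lambda+\sum_i\mu_i=1$. Let $\mu'_{i,0}=\Lambda_i\mu_{i,0}/\mu_i$. A bitmap $b\in\{0,1\}^d$ encodes which nodes are nonempty ($b(i)=1$) or empty ($b(i)=0$); $b'\ge b$ means $b'(i)\ge b(i)$ for all $i$. For a bitmap $b$ and $q\in\mathbb{R}^d$: $N_b(q)=\lambda e^{-q(1)/2}+\sum_{i:b(i)=1}\sum_{j:i\to j}\mu_{i,j}e^{(q(i)-q(j))/2}+\sum_{i:b(i)=1}\mu_{i,0}e^{q(i)/2}+\sum_{i:b(i)=0}\mu_i$, and $H_b(q)=-2\log N_b(q)$. Effective rates (recursively from the leaves): $M_i(b)=\mu_i$ if $b(i)=1$, and $M_i(b)=\min\big(\mu_i,\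 \sum_{k:i\to k}M_k(b)+\mu'_{i,0}\big)$ if $b(i)=0$. The effective gradient of $b$ is $q$ with $q(i)=2\log(\Lambda_i/M_i(b))$. *)

theory Defs
  imports Complex_Main
begin

text \<open>The tree is given by an edge relation E:
  E i j means j is a child of i. Routing rates mu i j (for E i j) and
  exit rates mu i 0 (index 0 is not a node, it encodes "leave the system").\<close>

definition nodes :: "nat \<Rightarrow> nat set" where
  "nodes d = {1..d}"

definition is_tree :: "nat \<Rightarrow> (nat \<Rightarrow> nat \<Rightarrow> bool) \<Rightarrow> bool" where
  "is_tree d E \<longleftrightarrow> d \<ge> 1
     \<and> (\<forall>i j. E i j \<longrightarrow> i \<in> nodes d \<and> j \<in> nodes d)
     \<and> (\<forall>i. \<not> E i 1)
     \<and> (\<forall>j \<in> nodes d. j \<noteq> 1 \<longrightarrow> (\<exists>!i. E i j))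
     \<and> (\<forall>j \<in> nodes d. (1, j) \<in> {(x, y). E x y}\<^sup>*)"

definition children :: "nat \<Rightarrow> (nat \<Rightarrow> nat \<Rightarrow> bool) \<Rightarrow> nat \<Rightarrow> nat set" where
  "children d E i = {j \<in> nodes d. E i j}"

definition mu_tot :: "nat \<Rightarrow> (nat \<Rightarrow> nat \<Rightarrow> bool) \<Rightarrow> (nat \<Rightarrow> nat \<Rightarrow> real) \<Rightarrow> nat \<Rightarrow> real" where
  "mu_tot d E mu i = (\<Sum>k\<in>children d E i. mu i k) + mu i 0"

definition arrival_rates ::
  "nat \<Rightarrow> (nat \<Rightarrow> nat \<Rightarrow> bool) \<Rightarrow> real \<Rightarrow> (nat \<Rightarrow> nat \<Rightarrow> real) \<Rightarrow> (nat \<Rightarrow> real) \<Rightarrow> bool" where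
  "arrival_rates d E lam mu Lam \<longleftrightarrow> Lam 1 = lam
     \<and> (\<forall>i j. E i j \<longrightarrow> Lam j = Lam i * mu i j / mu_tot d E mu i)"

definition mu_exit' ::
  "nat \<Rightarrow> (nat \<Rightarrow> nat \<Rightarrow> bool) \<Rightarrow> (nat \<Rightarrow> nat \<Rightarrow> real) \<Rightarrow> (nat \<Rightarrow> real) \<Rightarrow> nat \<Rightarrow> real" where
  "mu_exit' d E mu Lam i = Lam i * mu i 0 / mu_tot d E mu i"

definition effective_rates ::
  "nat \<Rightarrow> (nat \<Rightarrow> nat \<Rightarrow> bool) \<Rightarrow> (nat \<Rightarrow> nat \<Rightarrow> real) \<Rightarrow> (nat \<Rightarrow> real)
     \<Rightarrow> (nat \<Rightarrow> bool) \<Rightarrow> (nat \<Rightarrow> real) \<Rightarrow> bool" where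
  "effective_rates d E mu Lam b M \<longleftrightarrow>
     (\<forall>i \<in> nodes d.
        M i = (if b i then mu_tot d E mu i
               else min (mu_tot d E mu i)
                        ((\<Sum>k\<in>children d E i. M k) + mu_exit' d E mu Lam i)))"

definition N_fun ::
  "nat \<Rightarrow> (nat \<Rightarrow> nat \<Rightarrow> bool) \<Rightarrow> real \<Rightarrow> (nat \<Rightarrow> nat \<Rightarrow> real) \<Rightarrow> (nat \<Rightarrow> bool)
     \<Rightarrow> (nat \<Rightarrow> real) \<Rightarrow> real" where
  "N_fun d E lam mu b q =
     lam * exp (- q 1 / 2)
     + (\<Sum>i\<in>{i \<in> nodes d. b i}. \<Sum>j\<in>children d E i. mu i j * exp ((q i - q j) / 2))
     + (\<Sum>i\<in>{i \<in> nodes d. b i}. mu i 0 * exp (q i / 2))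
     + (\<Sum>i\<in>{i \<in> nodes d. \<not> b i}. mu_tot d E mu i)"

definition H_fun ::
  "nat \<Rightarrow> (nat \<Rightarrow> nat \<Rightarrow> bool) \<Rightarrow> real \<Rightarrow> (nat \<Rightarrow> nat \<Rightarrow> real) \<Rightarrow> (nat \<Rightarrow> bool)
     \<Rightarrow> (nat \<Rightarrow> real) \<Rightarrow> real" where
  "H_fun d E lam mu b q = - 2 * ln (N_fun d E lam mu b q)"

end

theory Submission
  imports Defs
begin

lemma tree_basic:
  assumes "is_tree d E"
  shows "1 \<in> nodes d" "finite (nodes d)" "\<And>i j. E i j \<Longrightarrow> i \<in> nodes d \<and> j \<in> nodes d"
    "\<And>i. \<not> E i 1"
  using assms unfolding is_tree_def nodes_def by auto

lemma children_sum:
  assumes t: "is_tree d E"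
  shows "(\<Sum>i\<in>nodes d. \<Sum>k\<in>children d E i. f k) = (\<Sum>j\<in>nodes d - {1}. f j)"
proof -
  have fin: "finite (nodes d)" using tree_basic[OF t] by auto
  have "(\<Sum>i\<in>nodes d. \<Sum>k\<in>children d E i. f k) = (\<Sum>p\<in>Sigma (nodes d) (children d E). f (snd p))"
    using sum.Sigma[of "nodes d" "children d E" "\<lambda>i k. f k"] fin
    by (simp add: children_def[abs_def] split_beta)
  also have "\<dots> = (\<Sum>j\<in>snd ` Sigma (nodes d) (children d E). f j)"
  proof (rule sum.reindex[symmetric, unfolded comp_def])
    show "inj_on snd (Sigma (nodes d) (children d E))"
    proof (rule inj_onI, clarsimp simp: children_def)
      fix a b a'
      assume "E a b" "E a' b" "b \<in> nodes d"
      moreover have "b \<noteq> 1" using \<open>E a b\<close> tree_basic(4)[OF t] by auto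
      ultimately show "a = a'" using t unfolding is_tree_def by metis
    qed
  qed
  also have "snd ` Sigma (nodes d) (children d E) = nodes d - {1}"
  proof
    show "snd ` Sigma (nodes d) (children d E) \<subseteq> nodes d - {1}"
      using tree_basic(4)[OF t] by (auto simp: children_def)
    show "nodes d - {1} \<subseteq> snd ` Sigma (nodes d) (children d E)"
    proof
      fix j assume j: "j \<in> nodes d - {1}"
      then obtain i where "E i j" using t unfolding is_tree_def by blast
      then have "(i, j) \<in> Sigma (nodes d) (children d E)"
        using tree_basic(3)[OF t] j by (auto simp: children_def)
      then show "j \<in> snd ` Sigma (nodes d) (children d E)" by force
    qed
  qed
  finally show ?thesis .
qed

lemma tree_acyclic:
  assumes t: "is_tree d E"
  shows "wf {(k, i). E i k}"
proof -
  let ?R = "{(x, y). E x y}"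
  define C where "C = {x. (x, x) \<in> ?R\<^sup>+}"
  have stepC: "y \<in> C" if "E y x" "x \<in> C" for x y
  proof -
    from that(2) have "(x, x) \<in> ?R\<^sup>+" by (simp add: C_def)
    then obtain z where z: "(x, z) \<in> ?R\<^sup>*" "E z x" by (blast dest: tranclD2)
    have "x \<noteq> 1" using that(1) tree_basic(4)[OF t] by auto
    moreover have "x \<in> nodes d" using tree_basic(3)[OF t] that(1) by auto
    ultimately have "z = y" using t z(2) that(1) unfolding is_tree_def by metis
    with z(1) have "(x, y) \<in> ?R\<^sup>*" by simp
    with that(1) have "(y, y) \<in> ?R\<^sup>+" by (meson case_prodI mem_Collect_eq rtrancl_into_trancl2)
    then show ?thesis by (simp add: C_def)
  qed
  have reach: "(1, j) \<in> ?R\<^sup>* \<Longrightarrow> j \<in> C \<Longrightarrow> 1 \<in> C" for j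
  proof (induction rule: rtrancl_induct)
    case base then show ?case .
  next
    case (step y z) then show ?case using stepC by blast
  qed
  have "acyclic ?R"
  proof (unfold acyclic_def, intro allI notI)
    fix x assume x: "(x, x) \<in> ?R\<^sup>+"
    then obtain z where "E z x" by (auto elim: tranclE)
    then have "x \<in> nodes d" using tree_basic(3)[OF t] by auto
    then have "(1, x) \<in> ?R\<^sup>*" using t unfolding is_tree_def by blast
    with x have "1 \<in> C" using reach C_def by auto
    then obtain w where "E w 1" by (auto simp: C_def elim: tranclE)
    then show False using tree_basic(4)[OF t] by auto
  qed
  then have "acyclic {(k, i). E i k}"
    using acyclic_converse[of ?R] by (simp add: converse_unfold)
  moreover have "finite {(k, i). E i k}"
  proof (rule finite_subset)
    show "{(k, i). E i k} \<subseteq> nodes d \<times> nodes d" using tree_basic(3)[OF t] by auto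
    show "finite (nodes d \<times> nodes d)" using tree_basic(2)[OF t] by auto
  qed
  ultimately show ?thesis by (simp add: finite_acyclic_wf)
qed

theorem mainTheorem3:
  fixes d :: nat and E :: "nat \<Rightarrow> nat \<Rightarrow> bool" and lam :: real
    and mu :: "nat \<Rightarrow> nat \<Rightarrow> real" and Lam M q :: "nat \<Rightarrow> real"
    and b b' :: "nat \<Rightarrow> bool"
  assumes tree: "is_tree d E"
    and lam_pos: "lam > 0"
    and mu_pos: "\<And>i j. E i j \<Longrightarrow> mu i j > 0"
    and mu_exit_nonneg: "\<And>i. i \<in> nodes d \<Longrightarrow> mu i 0 \<ge> 0"
    and mu_tot_pos: "\<And>i. i \<in> nodes d \<Longrightarrow> mu_tot d E mu i > 0"
    and Lam: "arrival_rates d E lam mu Lam"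
    and stable: "\<And>i. i \<in> nodes d \<Longrightarrow> Lam i / mu_tot d E mu i < 1"
    and normalized: "lam + (\<Sum>i\<in>nodes d. mu_tot d E mu i) = 1"
    and M: "effective_rates d E mu Lam b M"
    and q: "\<And>i. i \<in> nodes d \<Longrightarrow> q i = 2 * ln (Lam i / M i)"
    and ge: "\<And>i. i \<in> nodes d \<Longrightarrow> b i \<Longrightarrow> b' i"
  shows "H_fun d E lam mu b' q \<ge> 0"
proof -
  define mt where "mt = mu_tot d E mu"
  define Ch where "Ch = children d E"
  define me where "me = mu_exit' d E mu Lam"
  define S where "S i = (\<Sum>k\<in>Ch i. M k) + me i" for i
  define V where "V = nodes d"
  have one: "1 \<in> V" and fin: "finite V" and Enod: "\<And>i j. E i j \<Longrightarrow> i \<in> V \<and> j \<in> V"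
    using tree_basic[OF tree] by (auto simp: V_def)
  have Ch_iff: "k \<in> Ch i \<longleftrightarrow> E i k" for i k
    using Enod by (auto simp: Ch_def children_def V_def)
  have finCh: "finite (Ch i)" for i
    using fin by (auto simp: Ch_def children_def V_def)
  have mt_eq: "mt i = (\<Sum>k\<in>Ch i. mu i k) + mu i 0" for i
    by (simp add: mt_def Ch_def mu_tot_def)
  have mtpos: "i \<in> V \<Longrightarrow> mt i > 0" for i using mu_tot_pos by (simp add: mt_def V_def)
  have Lam1: "Lam 1 = lam" and LamE: "\<And>i j. E i j \<Longrightarrow> Lam j = Lam i * mu i j / mt i"
    using Lam by (auto simp: arrival_rates_def mt_def)
  have Lampos: "j \<in> V \<Longrightarrow> Lam j > 0" for j
  proof -
    assume "j \<in> V"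
    then have "(1, j) \<in> {(x, y). E x y}\<^sup>*" using tree by (auto simp: is_tree_def V_def)
    then show "Lam j > 0"
    proof (induction rule: rtrancl_induct)
      case base then show ?case using Lam1 lam_pos by simp
    next
      case (step y z)
      then have "E y z" by simp
      then show ?case using LamE[of y z] step.IH mu_pos[of y z] mtpos[of y] Enod[of y z] by simp
    qed
  qed
  have me_eq: "me i = Lam i * mu i 0 / mt i" for i by (simp add: me_def mu_exit'_def mt_def)
  have me_nn: "i \<in> V \<Longrightarrow> me i \<ge> 0" for i
    using Lampos[of i] mtpos[of i] mu_exit_nonneg[of i] by (simp add: me_eq V_def)
  have Mdef: "i \<in> V \<Longrightarrow> M i = (if b i then mt i else min (mt i) (S i))" for i
    using M by (simp add: effective_rates_def V_def mt_def S_def Ch_def me_def)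
  have Mpos: "i \<in> V \<longrightarrow> M i > 0" for i
  proof (induction i rule: wf_induct[OF tree_acyclic[OF tree]])
    case (1 i)
    show ?case
    proof
      assume iV: "i \<in> V"
      have chpos: "k \<in> Ch i \<Longrightarrow> M k > 0" for k
        using 1[rule_format, of k] Ch_iff[of k i] Enod[of i k] by auto
      have Spos: "S i > 0"
      proof (cases "Ch i = {}")
        case True
        then have "mu i 0 > 0" using mtpos[OF iV] mt_eq[of i] by simp
        then have "me i > 0" using Lampos[OF iV] mtpos[OF iV] by (simp add: me_eq)
        then show ?thesis using True by (simp add: S_def)
      next
        case False
        then have "(\<Sum>k\<in>Ch i. M k) > 0" using chpos finCh[of i] by (simp add: sum_pos)
        then show ?thesis using me_nn[OF iV] by (simp add: S_def)
      qed
      show "M i > 0" using Mdef[OF iV] mtpos[OF iV] Spos by auto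
    qed
  qed
  have csum: "(\<Sum>i\<in>V. \<Sum>k\<in>Ch i. f k) = (\<Sum>j\<in>V - {1}. f j)" for f
    using children_sum[OF tree, of f] by (simp add: V_def Ch_def)
  have flow: "i \<in> V \<Longrightarrow> Lam i = (\<Sum>k\<in>Ch i. Lam k) + me i" for i
  proof -
    assume iV: "i \<in> V"
    have "(\<Sum>k\<in>Ch i. Lam k) = (\<Sum>k\<in>Ch i. Lam i / mt i * mu i k)"
      by (rule sum.cong) (auto simp: Ch_iff LamE)
    also have "\<dots> = Lam i / mt i * (\<Sum>k\<in>Ch i. mu i k)" by (simp add: sum_distrib_left)
    finally have "(\<Sum>k\<in>Ch i. Lam k) + me i = Lam i / mt i * ((\<Sum>k\<in>Ch i. mu i k) + mu i 0)"
      by (simp add: me_eq algebra_simps)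
    also have "\<dots> = Lam i" using mtpos[OF iV] by (simp add: mt_eq[symmetric])
    finally show ?thesis by simp
  qed
  have split1: "(\<Sum>i\<in>V. g i) = g 1 + (\<Sum>i\<in>V - {1}. g i)" for g :: "nat \<Rightarrow> real"
    using fin one by (simp add: sum.remove)
  have sum_me: "(\<Sum>i\<in>V. me i) = lam"
  proof -
    have "(\<Sum>i\<in>V. Lam i) = (\<Sum>i\<in>V. (\<Sum>k\<in>Ch i. Lam k) + me i)"
      by (rule sum.cong) (auto simp: flow)
    also have "\<dots> = (\<Sum>j\<in>V - {1}. Lam j) + (\<Sum>i\<in>V. me i)" by (simp add: sum.distrib csum)
    finally show ?thesis using split1[of Lam] Lam1 by simp
  qed
  have MS: "M 1 - lam = (\<Sum>i\<in>V. M i - S i)"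
  proof -
    have "(\<Sum>i\<in>V. S i) = (\<Sum>j\<in>V - {1}. M j) + lam"
      by (simp add: S_def sum.distrib csum sum_me)
    then show ?thesis using split1[of M] by (simp add: sum_subtractf)
  qed
  define X where "X i = (if b' i then mt i * S i / M i else mt i)" for i
  have qexp: "i \<in> V \<Longrightarrow> exp (q i / 2) = Lam i / M i" for i
    using q[of i] Lampos[of i] Mpos[of i] by (simp add: V_def)
  have term1: "lam * exp (- q 1 / 2) = M 1"
  proof -
    have "exp (- q 1 / 2) = inverse (exp (q 1 / 2))" by (simp add: exp_minus[symmetric])
    then show ?thesis using qexp[OF one] Lam1 lam_pos Mpos[of 1] one by simp
  qed
  have term2: "(\<Sum>j\<in>Ch i. mu i j * exp ((q i - q j) / 2)) + mu i 0 * exp (q i / 2) = mt i * S i / M i"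
    if iV: "i \<in> V" for i
  proof -
    have "(\<Sum>j\<in>Ch i. mu i j * exp ((q i - q j) / 2)) = (\<Sum>j\<in>Ch i. mt i * M j / M i)"
    proof (rule sum.cong)
      fix j assume "j \<in> Ch i"
      then have E: "E i j" by (simp add: Ch_iff)
      then have jV: "j \<in> V" using Enod by auto
      have "exp ((q i - q j) / 2) = exp (q i / 2) / exp (q j / 2)"
        by (simp add: diff_divide_distrib exp_diff)
      also have "\<dots> = (Lam i / M i) / (Lam j / M j)" using qexp iV jV by simp
      finally show "mu i j * exp ((q i - q j) / 2) = mt i * M j / M i"
        using LamE[OF E] mu_pos[OF E] mtpos[OF iV] Lampos[OF iV] Mpos[of i] Mpos[of j] iV jV
        by (simp add: field_simps)
    qed simp
    also have "\<dots> = mt i * (\<Sum>j\<in>Ch i. M j) / M i"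
      by (simp add: sum_divide_distrib[symmetric] sum_distrib_left)
    finally have s1: "(\<Sum>j\<in>Ch i. mu i j * exp ((q i - q j) / 2)) = mt i * (\<Sum>j\<in>Ch i. M j) / M i" .
    have s2: "mu i 0 * exp (q i / 2) = mt i * me i / M i"
      using qexp[OF iV] Mpos[of i] iV mtpos[OF iV] by (simp add: me_eq field_simps)
    show ?thesis unfolding s1 s2 S_def by (simp add: add_divide_distrib distrib_left)
  qed
  have Neq: "N_fun d E lam mu b' q = M 1 + (\<Sum>i\<in>V. X i)"
  proof -
    let ?A = "{i \<in> V. b' i}" and ?B = "{i \<in> V. \<not> b' i}"
    have VAB: "V = ?A \<union> ?B" by auto
    have "(\<Sum>i\<in>V. X i) = (\<Sum>i\<in>?A. X i) + (\<Sum>i\<in>?B. X i)"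
      by (subst VAB, rule sum.union_disjoint) (use fin in auto)
    also have "(\<Sum>i\<in>?A. X i) = (\<Sum>i\<in>?A. (\<Sum>j\<in>Ch i. mu i j * exp ((q i - q j) / 2)) + mu i 0 * exp (q i / 2))"
      by (rule sum.cong) (auto simp: X_def term2)
    also have "(\<Sum>i\<in>?B. X i) = (\<Sum>i\<in>?B. mt i)"
      by (rule sum.cong) (auto simp: X_def)
    finally show ?thesis unfolding N_fun_def term1
      by (simp add: sum.distrib V_def Ch_def mt_def)
  qed
  have D: "i \<in> V \<Longrightarrow> (M i - S i) + (X i - mt i) \<le> 0" for i
  proof -
    assume iV: "i \<in> V"
    have Mi: "M i > 0" using Mpos iV by auto
    show ?thesis
    proof (cases "b' i")
      case b'T: True
      show ?thesis
      proof (cases "b i")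
        case True then show ?thesis using Mdef[OF iV] b'T mtpos[OF iV] by (simp add: X_def)
      next
        case False
        then have Mi': "M i = min (mt i) (S i)" using Mdef[OF iV] by simp
        show ?thesis
        proof (cases "S i \<le> mt i")
          case True then have "M i = S i" using Mi' by simp
          then show ?thesis using b'T Mi by (simp add: X_def)
        next
          case False then have "M i = mt i" using Mi' by simp
          then show ?thesis using b'T Mi by (simp add: X_def)
        qed
      qed
    next
      case False
      then have "\<not> b i" using ge iV by (auto simp: V_def)
      then show ?thesis using Mdef[OF iV] False by (simp add: X_def)
    qed
  qed
  have Nle: "N_fun d E lam mu b' q \<le> 1"
  proof -
    have "N_fun d E lam mu b' q - 1 = (\<Sum>i\<in>V. (M i - S i) + (X i - mt i))"
      using Neq MS normalized by (simp add: sum.distrib sum_subtractf V_def mt_def algebra_simps)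
    also have "\<dots> \<le> 0" using D by (simp add: sum_nonpos)
    finally show ?thesis by simp
  qed
  have Xnn: "i \<in> V \<Longrightarrow> X i \<ge> 0" for i
  proof -
    assume iV: "i \<in> V"
    have "(\<Sum>k\<in>Ch i. M k) \<ge> 0"
    proof (rule sum_nonneg)
      fix k assume "k \<in> Ch i"
      then have "k \<in> V" using Ch_iff Enod by blast
      then show "M k \<ge> 0" using Mpos[of k] by simp
    qed
    then have "S i \<ge> 0" using me_nn[OF iV] by (simp add: S_def)
    then show ?thesis using mtpos[OF iV] Mpos[of i] iV by (simp add: X_def)
  qed
  have Npos: "N_fun d E lam mu b' q > 0"
    using Neq Mpos[of 1] one Xnn sum_nonneg[of V X] by (simp add: add_pos_nonneg)
  show ?thesis using Nle Npos by (simp add: H_fun_def)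
qed

end
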